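(* Let $F$ be a field of prime characteristic $p$, let $1\le r\le s$, let $m\ge0$ be the smallest integer with $r\le p^m$, let $A=F[X,Y]/(X^r,Y^s)$ with $x,y$ the images of $X,Y$, and regard $A$ as a module over the subalgebra $F[x+y]$. (a) If $s\equiv0\pmod{p^m}$, then $(x+y)^s=0$, $A=\bigoplus_{i=0}^{r-1} x^iF[x+y]$, and $x^i(x+y)^{s-1}\neq 0$ for $0\leq i<r$. Consequently $\varepsilon(r,s,p)=(0,0,\dots,0)$. (b) If $\varepsilon(r,s,p)=(0,0,\dots,0)$, then $s\equiv0\pmod{p^m}$.
   Context: For a positive integer $n$, let $J_n$ denote the $n\times n$ matrix with $1$s in positions $(i,i)$ for $1\le i\le n$ and $(i,i+1)$ for $1\le i<n$, and $0$s elsewhere. For $1\le r\le s$, the Jordan canonical form of $J_r\otimes J_s$ over a field of characteristic $p$ is $J_{\lambda_1}\oplus\cdots\oplus J_{\lambda_r}$ with $\lambda_1\ge\cdots\ge\lambda_r>0$; write $\lambda(r,s,p)=(\lambda_1,\dots,\lambda_r)$. The deviation vector is $\varepsilon(r,s,p)=(\lambda_1-s,\dots,\lambda_r-s)$. *)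

theory Defs
  imports "Jordan_Normal_Form.Jordan_Normal_Form" "HOL-Computational_Algebra.Polynomial"
begin

text \<open>F[X,Y] is modelled as 'a poly poly: polynomials in Y whose coefficients
  are polynomials in X.\<close>

definition varX :: "'a::comm_ring_1 poly poly" where
  "varX = [:[:0, 1:]:]"

definition varY :: "'a::comm_ring_1 poly poly" where
  "varY = [:0, 1:]"

text \<open>Membership in the ideal (X^r, Y^s) of F[X,Y]; two polynomials have the same
  image in A = F[X,Y]/(X^r,Y^s) iff their difference lies in this ideal.\<close>

definition in_ideal_XY :: "nat \<Rightarrow> nat \<Rightarrow> 'a::comm_ring_1 poly poly \<Rightarrow> bool" where
  "in_ideal_XY r s P \<longleftrightarrow> (\<exists>a b. P = a * varX ^ r + b * varY ^ s)"

text \<open>Substitution of x+y into a univariate polynomial f \<in> F[t]; the images of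
  these are exactly the elements of the subalgebra F[x+y] of A.\<close>

definition subst_xy :: "'a::comm_ring_1 poly \<Rightarrow> 'a poly poly" where
  "subst_xy f = poly (map_poly (\<lambda>c. [:[:c:]:]) f) (varX + varY)"

definition direct_sum_decomp :: "'a::comm_ring_1 itself \<Rightarrow> nat \<Rightarrow> nat \<Rightarrow> bool" where
  "direct_sum_decomp _ r s \<longleftrightarrow>
     (\<forall>P :: 'a poly poly. \<exists>f :: nat \<Rightarrow> 'a poly.
        in_ideal_XY r s (P - (\<Sum>i<r. varX ^ i * subst_xy (f i)))) \<and>
     (\<forall>f :: nat \<Rightarrow> 'a poly.
        in_ideal_XY r s (\<Sum>i<r. varX ^ i * subst_xy (f i)) \<longrightarrow>
        (\<forall>i<r. in_ideal_XY r s (varX ^ i * subst_xy (f i))))"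

definition kron_mat :: "'a::times mat \<Rightarrow> 'a mat \<Rightarrow> 'a mat" where
  "kron_mat A B = mat (dim_row A * dim_row B) (dim_col A * dim_col B)
     (\<lambda>(i, j). A $$ (i div dim_row B, j div dim_col B) * B $$ (i mod dim_row B, j mod dim_col B))"

abbreviation J :: "nat \<Rightarrow> 'a::{zero,one} mat" where
  "J n \<equiv> jordan_block n 1"

definition jordan_sizes :: "'a::semiring_1 mat \<Rightarrow> nat list" where
  "jordan_sizes M = rev (sort (map fst (SOME n_as. jordan_nf M n_as)))"

text \<open>lambda(r,s,p), computed over the field 'a (of characteristic p).\<close>
definition lambda_rs :: "'a::field itself \<Rightarrow> nat \<Rightarrow> nat \<Rightarrow> nat list" where
  "lambda_rs _ r s = jordan_sizes (kron_mat (J r) (J s) :: 'a mat)"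

definition eps_rs :: "'a::field itself \<Rightarrow> nat \<Rightarrow> nat \<Rightarrow> int list" where
  "eps_rs T r s = map (\<lambda>l. int l - int s) (lambda_rs T r s)"

end

theory Submission
  imports Defs "HOL-Computational_Algebra.Primes"
    "Jordan_Normal_Form.Jordan_Normal_Form_Existence" "Jordan_Normal_Form.Jordan_Normal_Form_Uniqueness"
begin


definition cf :: "'a::comm_ring_1 poly poly \<Rightarrow> nat \<Rightarrow> nat \<Rightarrow> 'a" where
  "cf P a b = coeff (coeff P b) a"

lemma varX_mult: "varX * P = Polynomial.smult [:0,1:] P"
  by (simp add: varX_def)

lemma cf_X: "cf (varX * P) a b = (if a = 0 then 0 else cf P (a - 1) b)"
  by (cases a) (auto simp: cf_def varX_mult coeff_pCons)

lemma varY_mult: "varY * P = pCons 0 P"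
  by (simp add: varY_def)

lemma cf_Y: "cf (varY * P) a b = (if b = 0 then 0 else cf P a (b - 1))"
  by (cases b) (auto simp: cf_def varY_mult)

lemma cf_add[simp]: "cf (P + Q) a b = cf P a b + cf Q a b"
  by (simp add: cf_def)
lemma cf_diff[simp]: "cf (P - Q) a b = cf P a b - cf Q a b"
  by (simp add: cf_def)
lemma cf_0[simp]: "cf 0 a b = 0"
  by (simp add: cf_def)
lemma cf_1: "cf 1 a b = (if a = 0 \<and> b = 0 then 1 else 0)"
  by (auto simp: cf_def coeff_1)
lemma cf_sum: "cf (sum f A) a b = (\<Sum>i\<in>A. cf (f i) a b)"
  by (induct A rule: infinite_finite_induct) auto

lemma varX_pow: "varX ^ n = [:monom 1 n:]"
  by (induct n) (auto simp: varX_def monom_Suc mult.commute)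

lemma varY_pow: "varY ^ n = monom 1 n"
  by (simp add: varY_def monom_altdef)

lemma ideal_add: "in_ideal_XY r s P \<Longrightarrow> in_ideal_XY r s Q \<Longrightarrow> in_ideal_XY r s (P + Q)"
proof -
  assume "in_ideal_XY r s P" "in_ideal_XY r s Q"
  then obtain a b c d where "P = a * varX ^ r + b * varY ^ s" "Q = c * varX ^ r + d * varY ^ s"
    unfolding in_ideal_XY_def by blast
  then have "P + Q = (a + c) * varX ^ r + (b + d) * varY ^ s" by (simp add: algebra_simps)
  then show ?thesis unfolding in_ideal_XY_def by blast
qed

lemma ideal_mult: "in_ideal_XY r s P \<Longrightarrow> in_ideal_XY r s (Q * P)"
proof -
  assume "in_ideal_XY r s P"
  then obtain a b where "P = a * varX ^ r + b * varY ^ s"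
    unfolding in_ideal_XY_def by blast
  then have "Q * P = (Q * a) * varX ^ r + (Q * b) * varY ^ s" by (simp add: algebra_simps)
  then show ?thesis unfolding in_ideal_XY_def by blast
qed

lemma ideal_neg: "in_ideal_XY r s P \<Longrightarrow> in_ideal_XY r s (- P)"
  using ideal_mult[of r s P "-1"] by simp

lemma ideal_diff: "in_ideal_XY r s P \<Longrightarrow> in_ideal_XY r s Q \<Longrightarrow> in_ideal_XY r s (P - Q)"
  using ideal_add[of r s P "-Q"] ideal_neg[of r s Q] by simp

lemma ideal_0: "in_ideal_XY r s 0"
  unfolding in_ideal_XY_def by (rule exI[of _ 0], rule exI[of _ 0]) simp

lemma ideal_sum: "(\<And>i. i \<in> A \<Longrightarrow> in_ideal_XY r s (f i)) \<Longrightarrow> in_ideal_XY r s (sum f A)"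
  by (induct A rule: infinite_finite_induct) (auto intro: ideal_add ideal_0)

lemma ideal_X: "r \<le> k \<Longrightarrow> in_ideal_XY r s (varX ^ k)"
proof -
  assume "r \<le> k"
  then have "varX ^ k = varX ^ (k - r) * varX ^ r" by (simp flip: power_add)
  then show ?thesis unfolding in_ideal_XY_def by (intro exI[of _ "varX ^ (k - r)"] exI[of _ 0]) simp
qed

lemma ideal_Y: "s \<le> k \<Longrightarrow> in_ideal_XY r s (varY ^ k)"
proof -
  assume "s \<le> k"
  then have "varY ^ k = varY ^ (k - s) * varY ^ s" by (simp flip: power_add)
  then show ?thesis unfolding in_ideal_XY_def by (intro exI[of _ 0] exI[of _ "varY ^ (k - s)"]) simp
qed

lemma ideal_cf: assumes "in_ideal_XY r s P" "a < r" "b < s" shows "cf P a b = 0"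
proof -
  from assms(1) obtain A B where P: "P = A * varX ^ r + B * varY ^ s" unfolding in_ideal_XY_def by blast
  have 1: "coeff (B * varY ^ s) b = 0" using assms(3)
    by (simp add: varY_pow mult.commute[of B] coeff_monom_mult)
  have 2: "coeff (A * varX ^ r) b = coeff A b * monom 1 r"
    by (simp add: varX_pow)
  show ?thesis using assms(2) unfolding P cf_def coeff_add 1 2
    by (simp add: mult.commute[of _ "monom 1 r"] coeff_monom_mult)
qed



abbreviation TT :: "'a::comm_ring_1 poly poly" where "TT \<equiv> varX + varY"

lemma poly_sum_bound: "degree (p :: 'a::comm_ring_1 poly) \<le> N \<Longrightarrow> poly p x = (\<Sum>i\<le>N. coeff p i * x ^ i)"
proof -
  assume d: "degree p \<le> N"
  have "poly p x = (\<Sum>i\<le>degree p. coeff p i * x ^ i)" by (simp add: Polynomial.poly_altdef)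
  also have "\<dots> = (\<Sum>i\<le>N. coeff p i * x ^ i)"
    by (rule sum.mono_neutral_left) (use d in \<open>auto simp: coeff_eq_0\<close>)
  finally show ?thesis .
qed

lemma subst_pCons: "subst_xy (pCons a f) = [:[:a:]:] + TT * subst_xy f"
proof -
  have "map_poly (\<lambda>c. [:[:c:]:]) (pCons a f) = pCons [:[:a:]:] (map_poly (\<lambda>c. [:[:c:]:]) f :: 'a poly poly poly)"
    by (rule poly_eqI) (simp add: coeff_map_poly coeff_pCons split: nat.split)
  then show ?thesis unfolding subst_xy_def by simp
qed

lemma subst_0[simp]: "subst_xy 0 = 0"
  unfolding subst_xy_def by simp

lemma subst_const: "subst_xy [:a:] = [:[:a:]:]"
  using subst_pCons[of a 0] by simp

lemma subst_add: "subst_xy (f + g) = subst_xy f + subst_xy g"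
proof (induct f g rule: poly_induct2)
  case 0 then show ?case by simp
next
  case (pCons a p b q)
  then show ?case by (simp add: subst_pCons algebra_simps)
qed

lemma subst_minus: "subst_xy (- f) = - subst_xy f"
proof (induct f)
  case 0 then show ?case by simp
next
  case (pCons a p)
  then show ?case by (simp add: subst_pCons algebra_simps)
qed

lemma subst_shift: "subst_xy (pCons 0 f) = TT * subst_xy f"
  by (simp add: subst_pCons)

lemma subst_sum: "degree f \<le> N \<Longrightarrow>
   subst_xy f = (\<Sum>k\<le>N. [:[:coeff f k:]:] * TT ^ k)"
proof -
  assume d: "degree f \<le> N"
  have d2: "degree (map_poly (\<lambda>c. [:[:c:]:]) f :: 'a poly poly poly) \<le> N"
    using map_poly_degree_leq[of "\<lambda>c. [:[:c:]:]" f] d by linarith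
  show ?thesis unfolding subst_xy_def poly_sum_bound[OF d2]
    by (rule sum.cong) (simp_all add: coeff_map_poly)
qed

lemma frob:
  assumes "prime p" "CHAR('a::field) = p"
  shows "(A + B :: 'a poly poly) ^ (p ^ k) = A ^ (p ^ k) + B ^ (p ^ k)"
proof -
  have c: "CHAR('a poly poly) = p" using assms(2) by simp
  show ?thesis by (rule freshmans_dream'[where n=k]) (simp_all add: assms)
qed

lemma dream_ideal:
  assumes "prime p" "CHAR('a::field) = p" "r \<le> p ^ m" "p ^ m dvd s"
    and W: "in_ideal_XY r s ((W :: 'a poly poly) ^ s)"
  shows "in_ideal_XY r s ((varX + W) ^ s)"
proof -
  define q where "q = p ^ m"
  from assms(4) obtain t where s: "s = q * t" unfolding q_def by blast
  have "(varX + W) ^ s = ((varX + W) ^ q) ^ t" by (simp add: s power_mult)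
  also have "(varX + W) ^ q = varX ^ q + W ^ q" unfolding q_def by (rule frob[OF assms(1,2)])
  also have "(varX ^ q + W ^ q) ^ t = (\<Sum>k\<le>t. of_nat (t choose k) * (varX ^ q) ^ k * (W ^ q) ^ (t - k))"
    by (rule binomial_ring)
  finally have eq: "(varX + W) ^ s = \<dots>" .
  show ?thesis unfolding eq
  proof (rule ideal_sum)
    fix k assume "k \<in> {..t}"
    show "in_ideal_XY r s (of_nat (t choose k) * (varX ^ q) ^ k * (W ^ q) ^ (t - k))"
    proof (cases "k = 0")
      case True
      have e: "of_nat (t choose k) * (varX ^ q) ^ k * (W ^ q) ^ (t - k) = 1 * W ^ s"
        unfolding True s by (simp add: power_mult)
      show ?thesis unfolding e by (rule ideal_mult[OF W])
    next
      case False
      then have "q \<le> q * k" by simp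
      then have "r \<le> q * k" using assms(3) unfolding q_def by linarith
      then have "in_ideal_XY r s (varX ^ (q * k))" by (rule ideal_X)
      then have "in_ideal_XY r s ((of_nat (t choose k) * (W ^ q) ^ (t - k)) * varX ^ (q * k))"
        by (rule ideal_mult)
      moreover have e: "of_nat (t choose k) * (varX ^ q) ^ k * (W ^ q) ^ (t - k) = (of_nat (t choose k) * (W ^ q) ^ (t - k)) * varX ^ (q * k)"
        by (simp only: power_mult[symmetric] mult_ac)
      ultimately show ?thesis by (simp only: e)
    qed
  qed
qed

lemma TT_eq: "TT = pCons [:0,1:] [:1:]"
  by (simp add: varX_def varY_def)

lemma TT_deg: "degree (TT :: 'a::field poly poly) = 1" and TT_lead: "lead_coeff (TT :: 'a::field poly poly) = 1"
  unfolding TT_eq by auto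

lemma coeff_TT_pow: "coeff ((TT :: 'a::field poly poly) ^ n) n = 1"
proof -
  have nz: "(TT :: 'a poly poly) \<noteq> 0" unfolding TT_eq by simp
  have "degree (TT ^ n :: 'a poly poly) = n"
    unfolding degree_power_eq[OF nz] TT_deg by simp
  then have "coeff ((TT :: 'a::field poly poly) ^ n) n = lead_coeff (TT ^ n)" by simp
  also have "\<dots> = 1" by (simp only: lead_coeff_power TT_lead) simp
  finally show ?thesis .
qed

lemma NM:
  fixes g :: "'a::field poly"
  assumes "i < r" "coeff g i \<noteq> 0" "1 \<le> s"
  shows "\<not> in_ideal_XY r s ([:g:] * TT ^ (s - 1))"
proof
  assume "in_ideal_XY r s ([:g:] * TT ^ (s - 1))"
  from ideal_cf[OF this assms(1)] assms(3) have "cf ([:g:] * TT ^ (s - 1)) i (s - 1) = 0" by simp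
  moreover have "cf ([:g:] * TT ^ (s - 1)) i (s - 1) = coeff g i"
    unfolding cf_def by (simp add: coeff_TT_pow)
  ultimately show False using assms(2) by simp
qed



lemma mpc: "f 0 = 0 \<Longrightarrow> map_poly f (pCons c p) = pCons (f c) (map_poly f p)"
  by (rule poly_eqI) (simp add: coeff_map_poly coeff_pCons split: nat.split)

definition EE :: "'a::comm_ring_1 poly poly \<Rightarrow> 'a poly poly" where
  "EE G = poly (map_poly subst_xy G) varX"

lemma EE_pCons: "EE (pCons f G) = subst_xy f + varX * EE G"
  unfolding EE_def by (subst mpc) simp_all

lemma EE_0[simp]: "EE 0 = 0"
  unfolding EE_def by simp

lemma EE_add: "EE (G + H) = EE G + EE H"
proof (induct G H rule: poly_induct2)
  case 0 then show ?case by simp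
next
  case (pCons a p b q)
  then show ?case by (simp add: EE_pCons subst_add algebra_simps)
qed

lemma EE_minus: "EE (- G) = - EE G"
proof (induct G)
  case 0 then show ?case by simp
next
  case (pCons a p)
  then show ?case by (simp add: EE_pCons subst_minus algebra_simps)
qed

lemma EE_T: "EE (map_poly (pCons 0) G) = TT * EE G"
proof (induct G)
  case 0 then show ?case by simp
next
  case (pCons a p)
  have "map_poly (pCons 0) (pCons a p) = pCons (pCons 0 a) (map_poly (pCons 0) p)"
    by (rule mpc) simp
  then show ?case using pCons(2) by (simp add: EE_pCons subst_shift algebra_simps)
qed

lemma EE_C: "EE (map_poly (\<lambda>a. [:a:]) c) = [:c:]"
proof (induct c)
  case 0 then show ?case by simp
next
  case (pCons a p)
  have "map_poly (\<lambda>a. [:a:]) (pCons a p) = pCons [:a:] (map_poly (\<lambda>a. [:a:]) p)"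
    by (rule mpc) simp
  then show ?case using pCons(2) by (simp add: EE_pCons subst_const varX_def)
qed

lemma EE_surj: "\<exists>G. P = EE G"
proof (induct P)
  case 0 then show ?case by (intro exI[of _ 0]) simp
next
  case (pCons c Q)
  then obtain G where G: "Q = EE G" by blast
  have "pCons c Q = [:c:] + varY * Q" by (simp add: varY_def)
  also have "varY * Q = TT * EE G - varX * EE G" by (simp add: G algebra_simps)
  also have "\<dots> = EE (map_poly (pCons 0) G + - pCons 0 G)"
    by (simp add: EE_add EE_minus EE_T EE_pCons)
  finally have "pCons c Q = EE (map_poly (\<lambda>a. [:a:]) c + (map_poly (pCons 0) G + - pCons 0 G))"
    by (simp add: EE_add EE_C)
  then show ?case by blast
qed

lemma spanning:
  fixes P :: "'a::comm_ring_1 poly poly"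
  shows "\<exists>f. in_ideal_XY r s (P - (\<Sum>i<r. varX ^ i * subst_xy (f i)))"
proof -
  obtain G where G: "P = EE G" using EE_surj by blast
  define N where "N = max (degree G) r"
  have d: "degree (map_poly subst_xy G) \<le> N"
    using map_poly_degree_leq[of subst_xy G] unfolding N_def by linarith
  have "P = (\<Sum>i\<le>N. coeff (map_poly subst_xy G) i * varX ^ i)"
    unfolding G EE_def by (rule poly_sum_bound[OF d])
  also have "\<dots> = (\<Sum>i\<le>N. varX ^ i * subst_xy (coeff G i))"
    by (rule sum.cong) (simp_all add: coeff_map_poly mult.commute)
  also have "{..N} = {..<r} \<union> {r..N}" unfolding N_def by auto
  finally have "P = (\<Sum>i\<in>{..<r} \<union> {r..N}. varX ^ i * subst_xy (coeff G i))" .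
  also have "\<dots> = (\<Sum>i<r. varX ^ i * subst_xy (coeff G i)) + (\<Sum>i\<in>{r..N}. varX ^ i * subst_xy (coeff G i))"
    by (rule sum.union_disjoint) auto
  finally have "P - (\<Sum>i<r. varX ^ i * subst_xy (coeff G i)) = (\<Sum>i\<in>{r..N}. varX ^ i * subst_xy (coeff G i))"
    by simp
  moreover have "in_ideal_XY r s (\<Sum>i\<in>{r..N}. varX ^ i * subst_xy (coeff G i))"
  proof (rule ideal_sum)
    fix i assume "i \<in> {r..N}"
    then have "in_ideal_XY r s (varX ^ i)" by (intro ideal_X) auto
    from ideal_mult[OF this, of "subst_xy (coeff G i)"]
    show "in_ideal_XY r s (varX ^ i * subst_xy (coeff G i))" by (simp add: mult.commute)
  qed
  ultimately show ?thesis by metis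
qed

lemma H1:
  fixes f :: "'a::comm_ring_1 poly"
  assumes hT: "in_ideal_XY r s ((TT :: 'a poly poly) ^ s)" and low: "\<forall>k<s. coeff f k = 0"
  shows "in_ideal_XY r s (subst_xy f)"
  unfolding subst_sum[OF order.refl]
proof (rule ideal_sum)
  fix k assume "k \<in> {..degree f}"
  show "in_ideal_XY r s ([:[:coeff f k:]:] * TT ^ k)"
  proof (cases "k < s")
    case True then show ?thesis using low by (simp add: ideal_0)
  next
    case False
    then have "TT ^ k = TT ^ (k - s) * TT ^ s" by (simp flip: power_add)
    then have e: "[:[:coeff f k:]:] * TT ^ k = ([:[:coeff f k:]:] * TT ^ (k - s)) * TT ^ s"
      by (metis mult.assoc)
    show ?thesis unfolding e by (rule ideal_mult[OF hT])
  qed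
qed

lemma H2:
  fixes f :: "'a::comm_ring_1 poly"
  assumes hT: "in_ideal_XY r s ((TT :: 'a poly poly) ^ s)" and j: "j < s" and low: "\<forall>k<j. coeff f k = 0"
  shows "in_ideal_XY r s (subst_xy f * TT ^ (s - 1 - j) - [:[:coeff f j:]:] * TT ^ (s - 1))"
proof -
  define N where "N = max (degree f) j"
  have dN: "degree f \<le> N" unfolding N_def by simp
  let ?g = "\<lambda>k. [:[:coeff f k:]:] * TT ^ k * TT ^ (s - 1 - j)"
  have "subst_xy f * TT ^ (s - 1 - j) = (\<Sum>k\<le>N. ?g k)"
    unfolding subst_sum[OF dN] by (simp add: sum_distrib_right)
  also have "\<dots> = ?g j + (\<Sum>k\<in>{..N} - {j}. ?g k)"
    by (rule sum.remove) (auto simp: N_def)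
  also have "?g j = [:[:coeff f j:]:] * TT ^ (s - 1)"
    using j by (simp add: mult.assoc flip: power_add)
  finally have eq: "subst_xy f * TT ^ (s - 1 - j) - [:[:coeff f j:]:] * TT ^ (s - 1) = (\<Sum>k\<in>{..N} - {j}. ?g k)"
    by simp
  show ?thesis unfolding eq
  proof (rule ideal_sum)
    fix k assume k: "k \<in> {..N} - {j}"
    show "in_ideal_XY r s (?g k)"
    proof (cases "k < j")
      case True then show ?thesis using low by (simp add: ideal_0)
    next
      case False
      with k have "k > j" by auto
      then have "TT ^ k * TT ^ (s - 1 - j) = TT ^ (k + (s - 1 - j) - s) * (TT :: 'a poly poly) ^ s"
        using j by (simp flip: power_add)
      then show ?thesis using ideal_mult[OF hT, of "[:[:coeff f k:]:] * TT ^ (k + (s - 1 - j) - s)"]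
        by (simp add: mult.assoc)
    qed
  qed
qed

lemma pCons_sum: "[:sum g A:] = (\<Sum>i\<in>A. [:g i:])"
proof (induct A rule: infinite_finite_induct)
  case (insert x F)
  have "[:sum g (insert x F):] = [:g x:] + [:sum g F:]" using insert(1,2) by simp
  then show ?case using insert by simp
qed auto

lemma X_C: "varX ^ i * [:[:c:]:] = [:monom c i:]"
  by (simp add: varX_pow smult_monom mult.commute[of "monom 1 i"])

lemma independence:
  fixes f :: "nat \<Rightarrow> 'a::field poly"
  assumes hT: "in_ideal_XY r s ((TT :: 'a poly poly) ^ s)" and s: "1 \<le> s"
    and hsum: "in_ideal_XY r s (\<Sum>i<r. varX ^ i * subst_xy (f i))"
  shows "\<forall>i<r. in_ideal_XY r s (varX ^ i * subst_xy (f i))"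
proof (rule ccontr)
  assume neg: "\<not> ?thesis"
  define K where "K = {k. k < s \<and> (\<exists>i<r. coeff (f i) k \<noteq> 0)}"
  have finK: "finite K" unfolding K_def by auto
  show False
  proof (cases "K = {}")
    case True
    then have "\<forall>i<r. \<forall>k<s. coeff (f i) k = 0" unfolding K_def by auto
    then have "\<forall>i<r. in_ideal_XY r s (varX ^ i * subst_xy (f i))"
      using H1[OF hT] ideal_mult by blast
    with neg show False by blast
  next
    case False
    define j where "j = Min K"
    have jK: "j \<in> K" unfolding j_def using finK False by (rule Min_in)
    then have js: "j < s" and "\<exists>i<r. coeff (f i) j \<noteq> 0" unfolding K_def by auto
    then obtain i0 where i0: "i0 < r" "coeff (f i0) j \<noteq> 0" by blast
    have low: "\<forall>i<r. \<forall>k<j. coeff (f i) k = 0"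
    proof (intro allI impI, rule ccontr)
      fix i k assume "i < r" "k < j" "coeff (f i) k \<noteq> 0"
      then have "k \<in> K" using js unfolding K_def by auto
      then have "j \<le> k" unfolding j_def using finK by simp
      with \<open>k < j\<close> show False by simp
    qed
    define c where "c i = coeff (f i) j" for i
    let ?A = "(\<Sum>i<r. varX ^ i * subst_xy (f i)) * TT ^ (s - 1 - j)"
    let ?B = "\<Sum>i<r. varX ^ i * (subst_xy (f i) * TT ^ (s - 1 - j) - [:[:c i:]:] * TT ^ (s - 1))"
    have A: "in_ideal_XY r s ?A" using ideal_mult[OF hsum] by (simp add: mult.commute)
    have B: "in_ideal_XY r s ?B"
      by (rule ideal_sum, rule ideal_mult, unfold c_def, rule H2[OF hT js]) (use low in auto)
    have "?A - ?B = (\<Sum>i<r. varX ^ i * subst_xy (f i) * TT ^ (s - 1 - j) - varX ^ i * (subst_xy (f i) * TT ^ (s - 1 - j) - [:[:c i:]:] * TT ^ (s - 1)))"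
      by (simp only: sum_distrib_right sum_subtractf)
    also have "\<dots> = (\<Sum>i<r. varX ^ i * [:[:c i:]:] * TT ^ (s - 1))"
      by (rule sum.cong) (simp_all add: right_diff_distrib mult.assoc)
    also have "\<dots> = (\<Sum>i<r. [:monom (c i) i:] * TT ^ (s - 1))"
      by (simp only: X_C)
    also have "\<dots> = [:\<Sum>i<r. monom (c i) i:] * TT ^ (s - 1)"
      by (simp only: pCons_sum sum_distrib_right)
    finally have eq: "?A - ?B = [:\<Sum>i<r. monom (c i) i:] * TT ^ (s - 1)" .
    have "coeff (\<Sum>i<r. monom (c i) i) i0 = c i0"
      using i0(1) by (simp add: coeff_sum)
    then have "coeff (\<Sum>i<r. monom (c i) i) i0 \<noteq> 0" using i0(2) by (simp add: c_def)
    from NM[OF i0(1) this s] ideal_diff[OF A B] eq show False by simp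
  qed
qed



definition enc :: "nat \<Rightarrow> nat \<Rightarrow> 'a::comm_ring_1 poly poly \<Rightarrow> 'a vec" where
  "enc r s P = vec (r * s) (\<lambda>i. cf P (r - 1 - i div s) (s - 1 - i mod s))"

abbreviation MM :: "nat \<Rightarrow> nat \<Rightarrow> 'a::comm_ring_1 mat" where
  "MM r s \<equiv> kron_mat (J r) (J s)"

abbreviation zz :: "'a::comm_ring_1 poly poly" where
  "zz \<equiv> varX + varY + varX * varY"

lemma enc_carrier[simp]: "enc r s P \<in> carrier_vec (r * s)" and enc_dim[simp]: "dim_vec (enc r s P) = r * s"
  unfolding enc_def by auto

lemma enc_index: "i < r * s \<Longrightarrow> enc r s P $ i = cf P (r - 1 - i div s) (s - 1 - i mod s)"
  unfolding enc_def by simp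

lemma MM_carrier: "(MM r s :: 'a::comm_ring_1 mat) \<in> carrier_mat (r * s) (r * s)"
  unfolding kron_mat_def by auto

lemma MM_dim[simp]: "dim_row (MM r s :: 'a::comm_ring_1 mat) = r * s" "dim_col (MM r s :: 'a::comm_ring_1 mat) = r * s"
  unfolding kron_mat_def by auto

lemma MM_index: "i < r * s \<Longrightarrow> j < r * s \<Longrightarrow>
  (MM r s :: 'a::comm_ring_1 mat) $$ (i, j) = J r $$ (i div s, j div s) * J s $$ (i mod s, j mod s)"
  unfolding kron_mat_def by simp

lemma sum_split_add: "sum g {..<m + (n::nat)} = sum g {..<m} + (\<Sum>d<n. g (m + d))"
  by (induct n) (simp_all add: add.assoc)

lemma double_sum: "(\<Sum>j<(r::nat) * s. g j) = (\<Sum>c<r. \<Sum>d<s. g (c * s + d))"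
proof (induct r)
  case 0 then show ?case by simp
next
  case (Suc r)
  have "(\<Sum>j<Suc r * s. g j) = (\<Sum>j<r * s + s. g j)" by (simp add: add.commute)
  also have "\<dots> = (\<Sum>j<r * s. g j) + (\<Sum>d<s. g (r * s + d))" by (rule sum_split_add)
  finally show ?case using Suc by simp
qed

lemma jsum: assumes "a < n"
  shows "(\<Sum>c<n. jordan_block n (1::'a::comm_ring_1) $$ (a, c) * h c) = h a + (if Suc a < n then h (Suc a) else 0)"
proof -
  have "(\<Sum>c<n. jordan_block n (1::'a) $$ (a, c) * h c) =
        (\<Sum>c<n. (if c = a then h c else 0) + (if c = Suc a then h c else 0))"
    by (rule sum.cong) (use assms in auto)
  also have "\<dots> = h a + (if Suc a < n then h (Suc a) else 0)"
    using assms by (simp add: sum.distrib)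
  finally show ?thesis .
qed

lemma zz_mult: "zz * P = varX * P + varY * P + varX * (varY * P)"
  by (simp add: algebra_simps)

lemma E2:
  assumes i: "i < r * s"
  shows "((MM r s :: 'a::comm_ring_1 mat) *\<^sub>v enc r s P) $ i = enc r s (P + zz * P) $ i"
proof -
  have s: "0 < s" using i by (cases s) auto
  have r: "0 < r" using i by (cases r) auto
  define a where "a = i div s"
  define b where "b = i mod s"
  have a: "a < r" unfolding a_def using i by (simp add: less_mult_imp_div_less)
  have b: "b < s" unfolding b_def using s by simp
  define v where "v c d = cf P (r - 1 - c) (s - 1 - d)" for c d
  have idx: "c * s + d < r * s" if "c < r" "d < s" for c d
  proof -
    have "c * s + d < c * s + s" using that by simp
    also have "\<dots> = Suc c * s" by simp
    also have "\<dots> \<le> r * s" using that by (intro mult_le_mono1) simp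
    finally show ?thesis .
  qed
  have "((MM r s :: 'a mat) *\<^sub>v enc r s P) $ i = (\<Sum>j<r * s. (MM r s :: 'a mat) $$ (i, j) * enc r s P $ j)"
    using i by (simp add: scalar_prod_def atLeast0LessThan)
  also have "\<dots> = (\<Sum>c<r. \<Sum>d<s. (MM r s :: 'a mat) $$ (i, c * s + d) * enc r s P $ (c * s + d))"
    by (rule double_sum)
  also have "\<dots> = (\<Sum>c<r. \<Sum>d<s. J r $$ (a, c) * (J s $$ (b, d) * v c d))"
    by (intro sum.cong refl) (simp add: MM_index[OF i idx] enc_index[OF idx] a_def b_def v_def mult.assoc)
  also have "\<dots> = (\<Sum>c<r. J r $$ (a, c) * (\<Sum>d<s. J s $$ (b, d) * v c d))"
    by (simp add: sum_distrib_left)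
  also have "\<dots> = (\<Sum>c<r. J r $$ (a, c) * (v c b + (if Suc b < s then v c (Suc b) else 0)))"
    by (rule sum.cong[OF refl]) (simp only: jsum[OF b])
  also have "\<dots> = (v a b + (if Suc b < s then v a (Suc b) else 0)) +
     (if Suc a < r then v (Suc a) b + (if Suc b < s then v (Suc a) (Suc b) else 0) else 0)"
    by (rule jsum[OF a])
  also have "\<dots> = enc r s (P + zz * P) $ i"
    unfolding enc_index[OF i] zz_mult a_def[symmetric] b_def[symmetric]
    using a b by (auto simp: cf_X cf_Y v_def)
  finally show ?thesis .
qed

lemma enc_add: "enc r s (P + Q) = enc r s P + enc r s Q"
  by (rule eq_vecI) (auto simp: enc_def)

lemma enc_diff: "enc r s (P - Q) = enc r s P - enc r s Q"
  by (rule eq_vecI) (auto simp: enc_def)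

lemma MM_enc: "(MM r s :: 'a::comm_ring_1 mat) *\<^sub>v enc r s P = enc r s (P + zz * P)"
proof (rule eq_vecI)
  fix i assume "i < dim_vec (enc r s (P + zz * P))"
  then show "((MM r s :: 'a mat) *\<^sub>v enc r s P) $ i = enc r s (P + zz * P) $ i"
    by (intro E2) simp
qed simp

lemma char_MM: "char_matrix (MM r s :: 'a::field mat) 1 = MM r s - 1\<^sub>m (r * s)"
  by (rule eq_matI) (auto simp: char_matrix_def)

lemma CM_enc: "char_matrix (MM r s :: 'a::field mat) 1 *\<^sub>v enc r s P = enc r s (zz * P)"
proof -
  have "char_matrix (MM r s :: 'a mat) 1 *\<^sub>v enc r s P = MM r s *\<^sub>v enc r s P - 1\<^sub>m (r * s) *\<^sub>v enc r s P"
    unfolding char_MM by (rule minus_mult_distrib_mat_vec[OF MM_carrier]) auto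
  also have "\<dots> = enc r s (P + zz * P) - enc r s P" by (simp add: MM_enc)
  also have "\<dots> = enc r s (zz * P)" by (simp flip: enc_diff)
  finally show ?thesis .
qed

lemma CM_pow_enc: "(char_matrix (MM r s :: 'a::field mat) 1 ^\<^sub>m k) *\<^sub>v enc r s P = enc r s (zz ^ k * P)"
proof (induct k arbitrary: P)
  case 0 then show ?case by (simp add: char_matrix_def)
next
  case (Suc k)
  have C: "char_matrix (MM r s :: 'a mat) 1 \<in> carrier_mat (r * s) (r * s)"
    using MM_carrier by (simp add: char_matrix_def)
  have "(char_matrix (MM r s :: 'a mat) 1 ^\<^sub>m Suc k) *\<^sub>v enc r s P =
        (char_matrix (MM r s :: 'a mat) 1 ^\<^sub>m k) *\<^sub>v (char_matrix (MM r s) 1 *\<^sub>v enc r s P)"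
    by (simp add: assoc_mult_mat_vec[OF pow_carrier_mat[OF C] C])
  also have "\<dots> = enc r s (zz ^ Suc k * P)" by (simp add: CM_enc Suc mult_ac)
  finally show ?case .
qed



lemma cf_zz: "cf (zz * Q) \<alpha> \<beta> = (if \<alpha> = 0 then 0 else cf Q (\<alpha> - 1) \<beta>) + (if \<beta> = 0 then 0 else cf Q \<alpha> (\<beta> - 1))
   + (if \<alpha> = 0 then 0 else if \<beta> = 0 then 0 else cf Q (\<alpha> - 1) (\<beta> - 1))"
  unfolding zz_mult by (simp add: cf_X cf_Y)

lemma cf_Xpow: "cf (varX ^ a :: 'a::comm_ring_1 poly poly) \<alpha> \<beta> = (if \<alpha> = a \<and> \<beta> = 0 then 1 else 0)"
  by (auto simp: cf_def varX_pow coeff_pCons coeff_monom split: nat.split)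

lemma cf_basis:
  "(cf (varX ^ a * zz ^ b :: 'a::comm_ring_1 poly poly) \<alpha> \<beta> \<noteq> 0 \<longrightarrow> a + b \<le> \<alpha> + \<beta> \<and> \<beta> \<le> b)
   \<and> cf (varX ^ a * zz ^ b :: 'a::comm_ring_1 poly poly) a b = 1"
proof (induct b arbitrary: \<alpha> \<beta>)
  case 0 then show ?case by (simp add: cf_Xpow)
next
  case (Suc b)
  let ?Q = "varX ^ a * zz ^ b :: 'a poly poly"
  have eq: "varX ^ a * zz ^ Suc b = zz * ?Q" by (simp add: mult_ac)
  have nz: "a + Suc b \<le> \<alpha> + \<beta> \<and> \<beta> \<le> Suc b" if "cf (zz * ?Q) \<alpha> \<beta> \<noteq> 0"
  proof -
    from that have "(\<alpha> \<noteq> 0 \<and> cf ?Q (\<alpha> - 1) \<beta> \<noteq> 0) \<or> (\<beta> \<noteq> 0 \<and> cf ?Q \<alpha> (\<beta> - 1) \<noteq> 0)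
       \<or> (\<alpha> \<noteq> 0 \<and> \<beta> \<noteq> 0 \<and> cf ?Q (\<alpha> - 1) (\<beta> - 1) \<noteq> 0)"
      unfolding cf_zz by (auto split: if_splits)
    then show ?thesis using Suc[of "\<alpha> - 1" \<beta>] Suc[of \<alpha> "\<beta> - 1"] Suc[of "\<alpha> - 1" "\<beta> - 1"] by auto
  qed
  have one: "cf (zz * ?Q) a (Suc b) = 1"
  proof -
    have "a \<noteq> 0 \<Longrightarrow> cf ?Q (a - 1) (Suc b) = 0" using Suc[of "a - 1" "Suc b"] by auto
    moreover have "a \<noteq> 0 \<Longrightarrow> cf ?Q (a - 1) b = 0" using Suc[of "a - 1" b] by auto
    moreover have "cf ?Q a b = 1" using Suc by blast
    ultimately show ?thesis unfolding cf_zz by auto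
  qed
  show ?case unfolding eq using nz one by blast
qed

definition Bj :: "nat \<Rightarrow> nat \<Rightarrow> nat \<Rightarrow> 'a::comm_ring_1 poly poly" where
  "Bj r s j = varX ^ (r - 1 - j div s) * zz ^ (s - 1 - j mod s)"

definition PP :: "nat \<Rightarrow> nat \<Rightarrow> 'a::comm_ring_1 mat" where
  "PP r s = mat (r * s) (r * s) (\<lambda>(i, j). cf (Bj r s j) (r - 1 - i div s) (s - 1 - i mod s))"

lemma PP_carrier: "PP r s \<in> carrier_mat (r * s) (r * s)"
  unfolding PP_def by auto

lemma PP_col: "j < r * s \<Longrightarrow> col (PP r s) j = enc r s (Bj r s j)"
  unfolding PP_def enc_def by (rule eq_vecI) auto

lemma div_lt: "i < r * s \<Longrightarrow> i div s < (r::nat)"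
  by (simp add: less_mult_imp_div_less)

lemma PP_ut: "upper_triangular (PP r s :: 'a::comm_ring_1 mat)"
  unfolding upper_triangular_def
proof (intro allI impI)
  fix i j assume i: "i < dim_row (PP r s :: 'a mat)" and ji: "j < i"
  then have i': "i < r * s" and j': "j < r * s" unfolding PP_def by auto
  have s: "0 < s" using i' by (cases s) auto
  have di: "i div s < r" and dj: "j div s < r" using div_lt[OF i'] div_lt[OF j'] .
  have mi: "i mod s < s" and mj: "j mod s < s" using s by auto
  have dd: "j div s \<le> i div s" using ji by (simp add: div_le_mono)
  show "PP r s $$ (i, j) = (0 :: 'a)"
  proof (rule ccontr)
    assume "PP r s $$ (i, j) \<noteq> (0 :: 'a)"
    then have "cf (varX ^ (r - 1 - j div s) * zz ^ (s - 1 - j mod s) :: 'a poly poly) (r - 1 - i div s) (s - 1 - i mod s) \<noteq> 0"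
      using i' j' unfolding PP_def Bj_def by simp
    then have A: "(r - 1 - j div s) + (s - 1 - j mod s) \<le> (r - 1 - i div s) + (s - 1 - i mod s)"
      and B: "s - 1 - i mod s \<le> s - 1 - j mod s"
      using cf_basis by blast+
    show False
    proof (cases "j div s = i div s")
      case True
      with A B mi mj have "j mod s = i mod s" by linarith
      with True have "j = i" by (metis div_mult_mod_eq)
      with ji show False by simp
    next
      case False
      with dd A B mi mj di dj show False by linarith
    qed
  qed
qed

lemma PP_diag: "i < r * s \<Longrightarrow> (PP r s :: 'a::comm_ring_1 mat) $$ (i, i) = 1"
  unfolding PP_def Bj_def by (simp add: cf_basis[THEN conjunct2])

lemma PP_det: "det (PP r s :: 'a::comm_ring_1 mat) = 1"
proof -
  have "det (PP r s :: 'a mat) = prod_list (diag_mat (PP r s))"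
    by (rule det_upper_triangular[OF PP_ut PP_carrier])
  also have "diag_mat (PP r s :: 'a mat) = map (\<lambda>_. 1) [0..<r * s]"
    unfolding diag_mat_def using PP_diag by (auto simp: PP_def)
  finally show ?thesis by (simp add: map_replicate_const)
qed

lemma sl_rep[simp]: "sum_list (replicate r (s::nat)) = r * s"
  by (induct r) auto

abbreviation JJ :: "nat \<Rightarrow> nat \<Rightarrow> 'a::{zero,one} mat" where
  "JJ r s \<equiv> jordan_matrix (replicate r (s, 1))"

lemma JJ_dim[simp]: "dim_row (JJ r s :: 'a::{zero,one} mat) = r * s" "dim_col (JJ r s :: 'a::{zero,one} mat) = r * s"
  by (simp_all add: sl_rep)

lemma JJ_carrier: "(JJ r s :: 'a::{zero,one} mat) \<in> carrier_mat (r * s) (r * s)"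
  unfolding carrier_mat_def by simp

lemma JJ_index: "k < r * s \<Longrightarrow> j < r * s \<Longrightarrow>
  (JJ r s :: 'a::{zero,one} mat) $$ (k, j) = (if k = j then 1 else if Suc k = j \<and> j mod s \<noteq> 0 then 1 else 0)"
proof (induct r arbitrary: k j)
  case 0 then show ?case by simp
next
  case (Suc r)
  have eq: "(JJ (Suc r) s :: 'a mat) = four_block_mat (jordan_block s 1) (0\<^sub>m s (r * s)) (0\<^sub>m (r * s) s) (JJ r s)"
    using JJ_dim[of r s, where 'a='a] by (simp add: jordan_matrix_def Let_def)
  have k: "k < s + r * s" and j: "j < s + r * s" using Suc by auto
  show ?case unfolding eq
    using Suc(1)[of "k - s" "j - s"] k j
    by (auto simp: le_mod_geq[of s j] not_less)
qed

lemma JJ_sum: assumes j: "j < r * s" and s: "0 < s"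
  shows "(\<Sum>k<r * s. h k * (JJ r s :: 'a::comm_ring_1 mat) $$ (k, j)) = h j + (if j mod s \<noteq> 0 then h (j - 1) else 0)"
proof -
  have "(\<Sum>k<r * s. h k * (JJ r s :: 'a mat) $$ (k, j)) =
        (\<Sum>k<r * s. (if k = j then h k else 0) + (if k = j - 1 \<and> j mod s \<noteq> 0 then h k else 0))"
  proof (rule sum.cong[OF refl])
    fix k assume "k \<in> {..<r * s}"
    then show "h k * (JJ r s :: 'a mat) $$ (k, j) = (if k = j then h k else 0) + (if k = j - 1 \<and> j mod s \<noteq> 0 then h k else 0)"
      using j by (cases "j = 0") (auto simp: JJ_index)
  qed
  also have "\<dots> = h j + (if j mod s \<noteq> 0 then h (j - 1) else 0)"
    using j by (auto simp: sum.distrib)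
  finally show ?thesis .
qed

lemma dm1: assumes h: "0 < j mod s" and s: "0 < (s::nat)"
  shows "(j - 1) div s = j div s" "(j - 1) mod s = j mod s - 1"
proof -
  have j: "j = j div s * s + j mod s" by simp
  then have j1: "j - 1 = j div s * s + (j mod s - 1)" using h by linarith
  have lt: "j mod s - 1 < s" using s by (meson less_imp_diff_less mod_less_divisor)
  show "(j - 1) div s = j div s" unfolding j1 using lt s by simp
  show "(j - 1) mod s = j mod s - 1" unfolding j1 using lt s by simp
qed

lemma MP_PJ:
  assumes hz: "in_ideal_XY r s ((zz :: 'a::comm_ring_1 poly poly) ^ s)"
  shows "MM r s * PP r s = PP r s * (JJ r s :: 'a mat)"
proof (rule eq_matI)
  fix i j assume "i < dim_row (PP r s * (JJ r s :: 'a mat))" "j < dim_col (PP r s * (JJ r s :: 'a mat))"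
  then have i: "i < r * s" and j: "j < r * s" by (auto simp: PP_def)
  have s: "0 < s" using i by (cases s) auto
  have lhs: "(MM r s * PP r s :: 'a mat) $$ (i, j) = cf (Bj r s j) (r - 1 - i div s) (s - 1 - i mod s) + cf (zz * Bj r s j) (r - 1 - i div s) (s - 1 - i mod s)"
  proof -
    have "(MM r s * PP r s :: 'a mat) $$ (i, j) = (MM r s *\<^sub>v col (PP r s) j) $ i"
      using i j by (simp add: PP_def)
    also have "\<dots> = enc r s (Bj r s j + zz * Bj r s j) $ i"
      unfolding PP_col[OF j] by (rule E2[OF i])
    finally show ?thesis using i by (simp add: enc_index)
  qed
  have rhs: "(PP r s * JJ r s :: 'a mat) $$ (i, j) = PP r s $$ (i, j) + (if j mod s \<noteq> 0 then PP r s $$ (i, j - 1) else (0 :: 'a))"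
  proof -
    have "(PP r s * JJ r s :: 'a mat) $$ (i, j) = (\<Sum>k<r * s. PP r s $$ (i, k) * (JJ r s :: 'a mat) $$ (k, j))"
      using i j JJ_dim[of r s, where 'a='a] by (simp add: PP_def scalar_prod_def atLeast0LessThan)
    also have "\<dots> = PP r s $$ (i, j) + (if j mod s \<noteq> 0 then PP r s $$ (i, j - 1) else 0)"
      by (rule JJ_sum[OF j s])
    finally show ?thesis .
  qed
  have zB: "zz * (Bj r s j :: 'a poly poly) = varX ^ (r - 1 - j div s) * zz ^ (Suc (s - 1 - j mod s))"
    unfolding Bj_def by (simp add: mult_ac)
  show "(MM r s * PP r s :: 'a mat) $$ (i, j) = (PP r s * JJ r s :: 'a mat) $$ (i, j)"
  proof (cases "j mod s = 0")
    case True
    then have "Suc (s - 1 - j mod s) = s" using s by simp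
    then have e: "zz * (Bj r s j :: 'a poly poly) = varX ^ (r - 1 - j div s) * zz ^ s" unfolding zB by simp
    have "in_ideal_XY r s (zz * (Bj r s j :: 'a poly poly))" unfolding e by (rule ideal_mult[OF hz])
    then have "cf (zz * (Bj r s j :: 'a poly poly)) (r - 1 - i div s) (s - 1 - i mod s) = 0"
      by (rule ideal_cf) (use s div_lt[OF i] in auto)
    then show ?thesis unfolding lhs rhs using True i j by (simp add: PP_def)
  next
    case False
    then have j1: "j - 1 < r * s" "(j - 1) div s = j div s" "(j - 1) mod s = j mod s - 1"
      using j s dm1[of j s] False by auto
    have ee: "s - 1 - (j mod s - 1) = Suc (s - 1 - j mod s)"
      using False s mod_less_divisor[OF s, of j] by linarith
    have "Bj r s (j - 1) = zz * (Bj r s j :: 'a poly poly)"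
      unfolding Bj_def j1(2,3) ee by (simp add: mult_ac)
    then show ?thesis unfolding lhs rhs using False i j j1 by (simp add: PP_def)
  qed
qed (simp_all add: PP_def)



lemma PP_inv: "\<exists>Q. Q \<in> carrier_mat (r * s) (r * s) \<and> PP r s * Q = 1\<^sub>m (r * s) \<and> Q * PP r s = (1\<^sub>m (r * s) :: 'a::field mat)"
proof -
  have "det (PP r s :: 'a mat) \<noteq> 0" by (simp add: PP_det)
  from det_non_zero_imp_unit[OF PP_carrier this, unfolded Units_def, of "()"]
  obtain B where B: "B \<in> carrier_mat (r * s) (r * s)" and BA: "B * (PP r s :: 'a mat) = 1\<^sub>m (r * s)" and AB: "(PP r s :: 'a mat) * B = 1\<^sub>m (r * s)"
    by (auto simp: ring_mat_def)
  then show ?thesis by blast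
qed

lemma jnf_MM:
  assumes hz: "in_ideal_XY r s ((zz :: 'a::field poly poly) ^ s)" and s: "0 < s"
  shows "jordan_nf (MM r s :: 'a mat) (replicate r (s, 1))"
proof -
  obtain Q where Q: "Q \<in> carrier_mat (r * s) (r * s)" "PP r s * Q = 1\<^sub>m (r * s)" "Q * PP r s = (1\<^sub>m (r * s) :: 'a mat)"
    using PP_inv by blast
  have "PP r s * (JJ r s :: 'a mat) * Q = MM r s * PP r s * Q" by (simp add: MP_PJ[OF hz])
  also have "\<dots> = MM r s * (PP r s * Q)"
    by (rule assoc_mult_mat[OF MM_carrier PP_carrier Q(1)])
  also have "\<dots> = MM r s" using Q(2) MM_carrier by simp
  finally have eq: "MM r s = PP r s * (JJ r s :: 'a mat) * Q" by simp
  have "similar_mat_wit (MM r s) (JJ r s :: 'a mat) (PP r s) Q"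
    by (rule similar_mat_witI[OF Q(2,3) eq MM_carrier JJ_carrier PP_carrier Q(1)])
  then show ?thesis unfolding jordan_nf_def similar_mat_def using s by auto
qed

lemma jnf_some: "jordan_nf A n_as \<Longrightarrow> jordan_nf A (SOME n_as. jordan_nf A n_as)"
  by (rule someI)

lemma jnf_dim: assumes "jordan_nf (A :: 'a::semiring_1 mat) n_as" "A \<in> carrier_mat n n"
  shows "sum_list (map fst n_as) = n"
proof -
  from assms(1) have "similar_mat A (jordan_matrix n_as)" unfolding jordan_nf_def by auto
  from similar_matD[OF this] obtain k where "A \<in> carrier_mat k k" "jordan_matrix n_as \<in> carrier_mat k k" by auto
  with assms(2) show ?thesis by (metis carrier_matD(1) jordan_matrix_dim(1))
qed

lemma all_eq_replicate: "\<forall>x\<in>set xs. x = c \<Longrightarrow> xs = replicate (length xs) c"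
  by (induct xs) auto

lemma sizes_a:
  assumes hz: "in_ideal_XY r s ((zz :: 'a::field poly poly) ^ s)" and s: "0 < s"
  shows "jordan_sizes (MM r s :: 'a mat) = replicate r s"
proof -
  define NA where "NA = (SOME n_as. jordan_nf (MM r s :: 'a mat) n_as)"
  have j0: "jordan_nf (MM r s :: 'a mat) (replicate r (s, 1))" by (rule jnf_MM[OF hz s])
  have j1: "jordan_nf (MM r s :: 'a mat) NA" unfolding NA_def by (rule jnf_some[OF j0])
  have "set NA = set (replicate r (s, 1 :: 'a))" by (rule jordan_nf_unique[OF j1 j0])
  then have allfst: "\<forall>x\<in>set (map fst NA). x = s" by (cases "r = 0") auto
  then have mf: "map fst NA = replicate (length NA) s" using all_eq_replicate[OF allfst] by simp
  have "sum_list (map fst NA) = r * s" by (rule jnf_dim[OF j1 MM_carrier])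
  then have "length NA * s = r * s" unfolding mf by simp
  then have "length NA = r" using s by simp
  then have "map fst NA = replicate r s" using mf by simp
  then show ?thesis unfolding jordan_sizes_def NA_def[symmetric] by simp
qed



lemma MM_ut: "upper_triangular (MM r s :: 'a::comm_ring_1 mat)"
  unfolding upper_triangular_def
proof (intro allI impI)
  fix i j assume i: "i < dim_row (MM r s :: 'a mat)" and ji: "j < i"
  then have i': "i < r * s" and j': "j < r * s" by auto
  have s: "0 < s" using i' by (cases s) auto
  have di: "i div s < r" and dj: "j div s < r" using div_lt[OF i'] div_lt[OF j'] .
  have mi: "i mod s < s" and mj: "j mod s < s" using s by auto
  have dd: "j div s \<le> i div s" using ji by (simp add: div_le_mono)
  show "(MM r s :: 'a mat) $$ (i, j) = 0"
  proof (cases "j div s = i div s")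
    case True
    have e1: "i = i div s * s + i mod s" and e2: "j = j div s * s + j mod s" by simp_all
    have "j div s * s = i div s * s" using True by simp
    then have "j mod s < i mod s" using ji e1 e2 by linarith
    then show ?thesis using MM_index[OF i' j'] di dj mi mj True by simp
  next
    case False
    then show ?thesis using MM_index[OF i' j'] di dj mi mj dd by simp
  qed
qed

lemma MM_diag: "i < r * s \<Longrightarrow> (MM r s :: 'a::comm_ring_1 mat) $$ (i, i) = 1"
  using MM_index[of i r s i] div_lt[of i r s] by (cases s) auto

lemma jnf_exists_MM: "jordan_nf (MM r s :: 'a::field mat) (triangular_to_jnf_vector (MM r s))"
  by (rule triangular_to_jnf_vector[OF MM_carrier MM_ut])

lemma charpoly_MM: "char_poly (MM r s :: 'a::field mat) = [:-1, 1:] ^ (r * s)"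
proof -
  have "diag_mat (MM r s :: 'a mat) = map (\<lambda>_. 1) [0..<r * s]"
    unfolding diag_mat_def using MM_diag by auto
  then show ?thesis
    unfolding char_poly_upper_triangular[OF MM_carrier MM_ut]
    by (simp add: map_replicate_const prod_list_replicate)
qed

lemma poly_prod_list_zero: "x \<in> set xs \<Longrightarrow> poly (f x) e = 0 \<Longrightarrow> poly (prod_list (map f xs)) e = 0"
  by (induct xs) auto

lemma eig1: assumes j: "jordan_nf (MM r s :: 'a::field mat) NA" and x: "(k, e) \<in> set NA"
  shows "e = 1"
proof -
  have k: "k \<noteq> 0" using j x unfolding jordan_nf_def by force
  have "poly ((\<lambda>(n, a). [:- a, 1:] ^ n) (k, e)) e = 0" using k by simp
  from poly_prod_list_zero[of "(k, e)" NA "\<lambda>(n, a). [:- a, 1:] ^ n" e, OF x this]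
  have "poly (char_poly (MM r s :: 'a mat)) e = 0" unfolding jordan_nf_char_poly[OF j] .
  then have "(- 1 + e) ^ (r * s) = 0" unfolding charpoly_MM by simp
  then show ?thesis by simp
qed

lemma zero00: "(B :: 'a::zero mat) \<in> carrier_mat 0 0 \<Longrightarrow> B = 0\<^sub>m 0 0"
  by (rule eq_matI) auto

lemma nil_JM: "\<forall>x\<in>set NA. x = (s, 1::'a::field) \<Longrightarrow>
  char_matrix (jordan_matrix NA) 1 ^\<^sub>m s = 0\<^sub>m (sum_list (map fst NA)) (sum_list (map fst NA))"
proof (induct NA)
  case Nil
  show ?case by (rule eq_matI) (auto simp: char_matrix_def)
next
  case (Cons x rest)
  then have x: "x = (s, 1)" and IH: "char_matrix (jordan_matrix rest) 1 ^\<^sub>m s = 0\<^sub>m (sum_list (map fst rest)) (sum_list (map fst rest))"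
    by auto
  define d where "d = sum_list (map fst rest)"
  have JM_id: "jordan_matrix (x # rest) = four_block_mat (jordan_block s (1::'a)) (0\<^sub>m s d) (0\<^sub>m d s) (jordan_matrix rest)"
    unfolding x d_def using jordan_matrix_dim[of rest] by (simp add: jordan_matrix_def Let_def)
  have CM_id: "char_matrix (jordan_matrix (x # rest)) 1 = four_block_mat (char_matrix (jordan_block s (1::'a)) 1) (0\<^sub>m s d) (0\<^sub>m d s) (char_matrix (jordan_matrix rest) 1)"
    unfolding JM_id unfolding char_matrix_def d_def by (intro eq_matI) auto
  have c1: "char_matrix (jordan_block s (1::'a)) 1 \<in> carrier_mat s s"
    unfolding char_matrix_jordan_block by (rule jordan_block_carrier)
  have c2: "char_matrix (jordan_matrix rest) 1 \<in> carrier_mat d d"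
    unfolding carrier_mat_def char_matrix_def d_def by simp
  have blk: "char_matrix (jordan_block s (1::'a)) 1 ^\<^sub>m s = 0\<^sub>m s s"
  proof -
    have "char_matrix (jordan_block s (1::'a)) 1 = jordan_block s 0" by (simp add: char_matrix_jordan_block)
    moreover have "(jordan_block s (0::'a)) ^\<^sub>m s = 0\<^sub>m s s"
      unfolding jordan_block_zero_pow by (rule eq_matI) auto
    ultimately show ?thesis by simp
  qed
  have "char_matrix (jordan_matrix (x # rest)) 1 ^\<^sub>m s = four_block_mat (0\<^sub>m s s) (0\<^sub>m s d) (0\<^sub>m d s) (0\<^sub>m d d)"
    unfolding CM_id pow_four_block_mat[OF c1 c2] blk IH[folded d_def] ..
  also have "\<dots> = 0\<^sub>m (s + d) (s + d)" by (rule eq_matI) auto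
  finally show ?case unfolding x d_def by simp
qed



lemma nilp_MM:
  assumes j: "jordan_nf (MM r s :: 'a::field mat) NA" and f: "\<forall>x\<in>set NA. fst x = s"
  shows "char_matrix (MM r s :: 'a mat) 1 ^\<^sub>m s = 0\<^sub>m (r * s) (r * s)"
proof -
  have all: "\<forall>x\<in>set NA. x = (s, 1)"
  proof
    fix x assume x: "x \<in> set NA"
    obtain k e where ke: "x = (k, e)" by force
    from eig1[OF j x[unfolded ke]] f x ke show "x = (s, 1)" by auto
  qed
  from j obtain P Q where wit: "similar_mat_wit (MM r s :: 'a mat) (jordan_matrix NA) P Q"
    unfolding jordan_nf_def similar_mat_def by blast
  have d: "sum_list (map fst NA) = r * s" by (rule jnf_dim[OF j MM_carrier])
  from similar_mat_witD2[OF MM_carrier wit] have P: "P \<in> carrier_mat (r * s) (r * s)" and Q: "Q \<in> carrier_mat (r * s) (r * s)"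
    by auto
  have "char_matrix (MM r s :: 'a mat) 1 ^\<^sub>m s = P * char_matrix (jordan_matrix NA) 1 ^\<^sub>m s * Q"
    by (rule similar_mat_wit_pow_id[OF similar_mat_wit_char_matrix[OF wit]])
  also have "char_matrix (jordan_matrix NA) 1 ^\<^sub>m s = 0\<^sub>m (r * s) (r * s)"
    using nil_JM[OF all] d by simp
  finally show ?thesis using P Q by simp
qed

lemma zero_mat_vec: "v \<in> carrier_vec n \<Longrightarrow> (0\<^sub>m n n :: 'a::semiring_1 mat) *\<^sub>v v = 0\<^sub>v n"
  by (rule eq_vecI) (auto simp: scalar_prod_def)

lemma dm2: "b < (s::nat) \<Longrightarrow> (a * s + b) div s = a \<and> (a * s + b) mod s = b"
  by (simp add: add.commute[of "a * s"])

lemma zz_zero: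
  assumes N: "char_matrix (MM r s :: 'a::field mat) 1 ^\<^sub>m s = 0\<^sub>m (r * s) (r * s)"
    and a: "\<alpha> < r" and b: "\<beta> < s"
  shows "cf ((zz :: 'a poly poly) ^ s) \<alpha> \<beta> = 0"
proof -
  have "enc r s ((zz :: 'a poly poly) ^ s * 1) = char_matrix (MM r s :: 'a mat) 1 ^\<^sub>m s *\<^sub>v enc r s 1"
    by (rule CM_pow_enc[symmetric])
  also have "\<dots> = 0\<^sub>v (r * s)" unfolding N by (rule zero_mat_vec) simp
  finally have E: "enc r s ((zz :: 'a poly poly) ^ s) = 0\<^sub>v (r * s)" by simp
  define i where "i = (r - 1 - \<alpha>) * s + (s - 1 - \<beta>)"
  have "i < (r - 1 - \<alpha>) * s + s" unfolding i_def using b by simp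
  also have "\<dots> = Suc (r - 1 - \<alpha>) * s" by simp
  also have "\<dots> \<le> r * s" using a by (intro mult_le_mono1) simp
  finally have i: "i < r * s" .
  have l: "s - 1 - \<beta> < s" using b by simp
  have dv: "i div s = r - 1 - \<alpha>" and md: "i mod s = s - 1 - \<beta>" unfolding i_def using dm2[OF l] by blast+
  have "enc r s ((zz :: 'a poly poly) ^ s) $ i = 0" using E i by simp
  then show ?thesis unfolding enc_index[OF i] dv md using a b by simp
qed

lemma zz_eq: "(zz :: 'a::comm_ring_1 poly poly) = varX + monom [:1, 1:] 1"
  by (simp add: varX_def varY_def monom_Suc monom_0 one_pCons)

lemma C_monom: "[:g:] * monom h d = monom (g * h) d"
  by (simp add: smult_monom)

lemma zz_coeff:
  assumes p: "prime p" and c: "CHAR('a::field) = p" and s: "s = p ^ v * t" and t: "0 < t"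
  shows "cf ((zz :: 'a poly poly) ^ s) (p ^ v) (s - p ^ v) = of_nat t"
proof -
  define q where "q = p ^ v"
  have q: "0 < q" unfolding q_def using p by (simp add: prime_gt_0_nat)
  define W where "W = (monom [:1, 1:] 1 :: 'a poly poly)"
  define c where "c k = (of_nat (t choose k) :: 'a poly) * monom 1 (q * k) * [:1, 1:] ^ (q * (t - k))" for k
  have "(zz :: 'a poly poly) ^ s = ((varX + W) ^ q) ^ t" unfolding zz_eq W_def s q_def by (simp add: power_mult)
  also have "(varX + W) ^ q = varX ^ q + W ^ q" unfolding q_def by (rule frob[OF p c])
  also have "(varX ^ q + W ^ q) ^ t = (\<Sum>k\<le>t. of_nat (t choose k) * (varX ^ q) ^ k * (W ^ q) ^ (t - k))"
    by (rule binomial_ring)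
  also have "\<dots> = (\<Sum>k\<le>t. monom (c k) (q * (t - k)))"
  proof (rule sum.cong[OF refl])
    fix k
    have "(varX ^ q) ^ k = ([:monom 1 (q * k):] :: 'a poly poly)" unfolding power_mult[symmetric] by (rule varX_pow)
    moreover have "(W ^ q) ^ (t - k) = monom ([:1, 1:] ^ (q * (t - k))) (q * (t - k))"
      unfolding W_def by (simp add: monom_power flip: power_mult)
    moreover have "(of_nat (t choose k) :: 'a poly poly) = [:of_nat (t choose k):]" by (simp add: of_nat_poly)
    moreover have "(of_nat (t choose k) :: 'a poly) = [:of_nat (t choose k):]" by (simp add: of_nat_poly)
    ultimately show "of_nat (t choose k) * (varX ^ q) ^ k * (W ^ q) ^ (t - k) = monom (c k) (q * (t - k))"
      unfolding c_def by (simp add: C_monom mult.assoc smult_monom mult_smult_left)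
  qed
  finally have Z: "(zz :: 'a poly poly) ^ s = (\<Sum>k\<le>t. monom (c k) (q * (t - k)))" .
  have sq: "s - q = q * (t - 1)" unfolding s q_def[symmetric] by (simp add: algebra_simps)
  have "coeff ((zz :: 'a poly poly) ^ s) (s - q) = (\<Sum>k\<le>t. if k = 1 then c k else 0)"
    unfolding Z coeff_sum
  proof (rule sum.cong[OF refl])
    fix k assume k: "k \<in> {..t}"
    have "(q * (t - k) = s - q) = (k = 1)" unfolding sq using q k t by auto
    then show "coeff (monom (c k) (q * (t - k))) (s - q) = (if k = 1 then c k else 0)" by simp
  qed
  also have "\<dots> = c 1" using t by simp
  finally have Y: "coeff ((zz :: 'a poly poly) ^ s) (s - q) = c 1" .
  have "coeff (c 1) q = of_nat t * coeff ([:1, 1:] ^ (q * (t - 1)) :: 'a poly) 0"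
    unfolding c_def by (simp add: of_nat_poly coeff_monom_mult mult.assoc)
  also have "coeff ([:1, 1:] ^ (q * (t - 1)) :: 'a poly) 0 = 1"
    by (simp add: poly_0_coeff_0[symmetric])
  finally show ?thesis unfolding cf_def Y q_def[symmetric] by simp
qed



lemma map_eq_replicate_all: "map f xs = replicate r c \<Longrightarrow> x \<in> set xs \<Longrightarrow> f x = c"
proof -
  assume h: "map f xs = replicate r c" and x: "x \<in> set xs"
  have "f x \<in> set (map f xs)" using x by simp
  then show "f x = c" unfolding h by (simp split: if_splits)
qed

theorem lemma10:
  fixes p r s :: nat
  assumes "prime p" and "CHAR('a::field) = p" and "1 \<le> r" and "r \<le> s"
  defines "m \<equiv> LEAST m. r \<le> p ^ m"
  shows "(p ^ m dvd s \<longrightarrow>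
            in_ideal_XY r s ((varX + varY) ^ s :: 'a poly poly) \<and>
            direct_sum_decomp TYPE('a) r s \<and>
            (\<forall>i<r. \<not> in_ideal_XY r s (varX ^ i * (varX + varY) ^ (s - 1) :: 'a poly poly)) \<and>
            eps_rs TYPE('a) r s = replicate r 0)
       \<and> (eps_rs TYPE('a) r s = replicate r 0 \<longrightarrow> p ^ m dvd s)"
proof -
  note p = assms(1) and c = assms(2)
  have s0: "0 < s" and s1: "1 \<le> s" using assms(3,4) by auto
  have p2: "2 \<le> p" using p by (simp add: prime_ge_2_nat)
  have "r < 2 ^ r" by (rule less_exp)
  also have "(2::nat) ^ r \<le> p ^ r" using p2 by (rule power_mono) simp
  finally have ex: "\<exists>k. r \<le> p ^ k" by (intro exI[of _ r]) simp
  have rm: "r \<le> p ^ m" unfolding m_def by (rule LeastI_ex[OF ex])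
  have lt: "\<not> r \<le> p ^ k" if "k < m" for k using not_less_Least[OF that[unfolded m_def]] .
  have eps_def': "eps_rs TYPE('a) r s = map (\<lambda>l. int l - int s) (jordan_sizes (MM r s :: 'a mat))"
    unfolding eps_rs_def lambda_rs_def ..
  have A: "in_ideal_XY r s ((varX + varY) ^ s :: 'a poly poly) \<and>
            direct_sum_decomp TYPE('a) r s \<and>
            (\<forall>i<r. \<not> in_ideal_XY r s (varX ^ i * (varX + varY) ^ (s - 1) :: 'a poly poly)) \<and>
            eps_rs TYPE('a) r s = replicate r 0" if dv: "p ^ m dvd s"
  proof -
    have hT: "in_ideal_XY r s ((varX + varY) ^ s :: 'a poly poly)"
      by (rule dream_ideal[OF p c rm dv]) (rule ideal_Y, simp)
    have hW: "in_ideal_XY r s ((varY + varX * varY :: 'a poly poly) ^ s)"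
    proof -
      have "(varY + varX * varY :: 'a poly poly) ^ s = (1 + varX) ^ s * varY ^ s"
        by (simp add: algebra_simps flip: power_mult_distrib)
      then show ?thesis using ideal_mult[OF ideal_Y[of s s r]] by simp
    qed
    have hz: "in_ideal_XY r s ((zz :: 'a poly poly) ^ s)"
      using dream_ideal[OF p c rm dv hW] by (simp add: add.assoc)
    have D: "direct_sum_decomp TYPE('a) r s"
      unfolding direct_sum_decomp_def using spanning independence[OF hT s1] by blast
    have N: "\<forall>i<r. \<not> in_ideal_XY r s (varX ^ i * (varX + varY) ^ (s - 1) :: 'a poly poly)"
    proof (intro allI impI)
      fix i assume i: "i < r"
      have "coeff (monom (1::'a) i) i \<noteq> 0" by simp
      from NM[OF i this s1] show "\<not> in_ideal_XY r s (varX ^ i * (varX + varY) ^ (s - 1) :: 'a poly poly)"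
        by (simp add: varX_pow)
    qed
    have E: "eps_rs TYPE('a) r s = replicate r 0"
      unfolding eps_def' sizes_a[OF hz s0] by simp
    show ?thesis using hT D N E by blast
  qed
  have B: "p ^ m dvd s" if e: "eps_rs TYPE('a) r s = replicate r 0"
  proof (rule ccontr)
    assume ndv: "\<not> p ^ m dvd s"
    define NA where "NA = (SOME n_as. jordan_nf (MM r s :: 'a mat) n_as)"
    have j: "jordan_nf (MM r s :: 'a mat) NA" unfolding NA_def by (rule jnf_some[OF jnf_exists_MM])
    have e2: "map (\<lambda>l. int l - int s) (rev (sort (map fst NA))) = replicate r 0"
      using e unfolding eps_def' jordan_sizes_def NA_def .
    have f: "\<forall>x\<in>set NA. fst x = s"
    proof
      fix x assume "x \<in> set NA"
      then have "fst x \<in> set (rev (sort (map fst NA)))" by simp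
      from map_eq_replicate_all[OF e2 this] show "fst x = s" by simp
    qed
    have Z: "cf ((zz :: 'a poly poly) ^ s) \<alpha> \<beta> = 0" if "\<alpha> < r" "\<beta> < s" for \<alpha> \<beta>
      by (rule zz_zero[OF nilp_MM[OF j f] that])
    have pu: "\<not> is_unit p" using p2 by simp
    obtain t where st: "s = p ^ multiplicity p s * t" and pt: "\<not> p dvd t"
      using multiplicity_decompose'[of s p] s0 pu by auto
    define v where "v = multiplicity p s"
    have t0: "0 < t" using st s0 by (cases t) auto
    have vm: "v < m"
    proof (rule ccontr)
      assume "\<not> v < m"
      then have "p ^ m dvd p ^ v" by (simp add: le_imp_power_dvd)
      moreover have "p ^ v dvd s" using st unfolding v_def by (metis dvd_triv_left)
      ultimately show False using ndv by (meson dvd_trans)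
    qed
    have qr: "p ^ v < r" using lt[OF vm] by simp
    have q0: "0 < p ^ v" using p by (simp add: prime_gt_0_nat)
    have "cf ((zz :: 'a poly poly) ^ s) (p ^ v) (s - p ^ v) = of_nat t"
      by (rule zz_coeff[OF p c st[folded v_def] t0])
    moreover have "cf ((zz :: 'a poly poly) ^ s) (p ^ v) (s - p ^ v) = 0"
      by (rule Z) (use qr q0 s0 in auto)
    moreover have "(of_nat t :: 'a) \<noteq> 0" using pt c by (simp add: of_nat_eq_0_iff_char_dvd)
    ultimately show False by simp
  qed
  show ?thesis using A B by blast
qed


end
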